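(* Let $(h,n)=(3,2)$ and $U=\{id\}\times S_2\leq S_3\times S_2$. Then $U$ is a neutrality group with respect to $(3,2)$ but not a symmetry group with respect to $(3,2)$.
   Context: Permutations compose as $(\sigma\tau)(x)=\sigma(\tau(x))$. Let $G=S_h\times S_n$ and $\mathcal{P}=(S_n)^h$ (preference profiles), with $G$ acting by $(p^{(\varphi,\psi)})_i=\psi\,p_{\varphi^{-1}(i)}$. A social preference function (SPF) is any $F:\mathcal{P}\to S_n$; its symmetry group is $G(F)=\{(\varphi,\psi)\in G: F(p^{(\varphi,\psi)})=\psi F(p)\ \forall p\}$ and its neutrality group is $G_2(F)=G(F)\cap(\{id\}\times S_n)$. $U$ is a symmetry group (resp. neutrality group) with respect to $(h,n)$ if $U=G(F)$ (resp. $U=G_2(F)$) for some SPF $F$. *)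

theory Defs
  imports "HOL-Combinatorics.Permutations"
begin

text \<open>Voters are 0..<h, alternatives are 0..<n. S_k = permutations of {..<k}.
  A preference profile is a function assigning to each voter i<h a permutation of
  {..<n}; entries for i \<ge> h are fixed to id (canonical representation).\<close>

definition profiles :: "nat \<Rightarrow> nat \<Rightarrow> (nat \<Rightarrow> nat \<Rightarrow> nat) set" where
  "profiles h n = {p. (\<forall>i<h. p i permutes {..<n}) \<and> (\<forall>i\<ge>h. p i = id)}"

definition act :: "nat \<Rightarrow> (nat \<Rightarrow> nat) \<Rightarrow> (nat \<Rightarrow> nat) \<Rightarrow> (nat \<Rightarrow> nat \<Rightarrow> nat) \<Rightarrow> (nat \<Rightarrow> nat \<Rightarrow> nat)" where
  "act h \<phi> \<psi> p = (\<lambda>i. if i < h then \<psi> \<circ> p (inv \<phi> i) else id)"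

text \<open>An SPF maps every profile to a permutation of the alternatives
  (its values outside profiles are irrelevant).\<close>
definition is_SPF :: "nat \<Rightarrow> nat \<Rightarrow> ((nat \<Rightarrow> nat \<Rightarrow> nat) \<Rightarrow> (nat \<Rightarrow> nat)) \<Rightarrow> bool" where
  "is_SPF h n F \<longleftrightarrow> (\<forall>p\<in>profiles h n. F p permutes {..<n})"

definition sym_group :: "nat \<Rightarrow> nat \<Rightarrow> ((nat \<Rightarrow> nat \<Rightarrow> nat) \<Rightarrow> (nat \<Rightarrow> nat))
    \<Rightarrow> ((nat \<Rightarrow> nat) \<times> (nat \<Rightarrow> nat)) set" where
  "sym_group h n F = {(\<phi>, \<psi>). \<phi> permutes {..<h} \<and> \<psi> permutes {..<n} \<and>
      (\<forall>p\<in>profiles h n. F (act h \<phi> \<psi> p) = \<psi> \<circ> F p)}"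

definition neut_group :: "nat \<Rightarrow> nat \<Rightarrow> ((nat \<Rightarrow> nat \<Rightarrow> nat) \<Rightarrow> (nat \<Rightarrow> nat))
    \<Rightarrow> ((nat \<Rightarrow> nat) \<times> (nat \<Rightarrow> nat)) set" where
  "neut_group h n F = sym_group h n F \<inter> ({id} \<times> {\<psi>. \<psi> permutes {..<n}})"

definition is_symmetry_group :: "nat \<Rightarrow> nat \<Rightarrow> ((nat \<Rightarrow> nat) \<times> (nat \<Rightarrow> nat)) set \<Rightarrow> bool" where
  "is_symmetry_group h n U \<longleftrightarrow> (\<exists>F. is_SPF h n F \<and> U = sym_group h n F)"

definition is_neutrality_group :: "nat \<Rightarrow> nat \<Rightarrow> ((nat \<Rightarrow> nat) \<times> (nat \<Rightarrow> nat)) set \<Rightarrow> bool" where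
  "is_neutrality_group h n U \<longleftrightarrow> (\<exists>F. is_SPF h n F \<and> U = neut_group h n F)"

end

theory Submission
  imports Defs
begin

definition tau :: "nat \<Rightarrow> nat" where "tau = Transposition.transpose 0 1"

definition mk :: "(nat \<Rightarrow> nat) \<Rightarrow> (nat \<Rightarrow> nat) \<Rightarrow> (nat \<Rightarrow> nat) \<Rightarrow> nat \<Rightarrow> nat \<Rightarrow> nat" where
  "mk a b c = (\<lambda>i. if i = 0 then a else if i = 1 then b else if i = 2 then c else id)"

lemma tau_perm: "tau permutes {..<2::nat}"
  unfolding tau_def by (rule permutes_swap_id) auto

lemma tau_tau: "tau \<circ> tau = id"
  unfolding tau_def by simp

lemma tau_ne_id: "tau \<noteq> id"
  unfolding tau_def by (simp add: transpose_eq_id_iff)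

lemma perm2:
  assumes "\<psi> permutes {..<2::nat}"
  shows "\<psi> = id \<or> \<psi> = tau"
proof -
  have out: "\<And>x. x \<ge> 2 \<Longrightarrow> \<psi> x = x" using assms unfolding permutes_def by auto
  have r0: "\<psi> 0 < 2" and r1: "\<psi> 1 < 2" using permutes_in_image[OF assms] by auto
  have ne: "\<psi> 0 \<noteq> \<psi> 1" using permutes_inj[OF assms] by (metis inj_eq zero_neq_one)
  show ?thesis
  proof (cases "\<psi> 0 = 0")
    case True
    then have "\<psi> 1 = 1" using r1 ne by auto
    have "\<psi> = id"
    proof
      fix x show "\<psi> x = id x"
        using True \<open>\<psi> 1 = 1\<close> out by (cases "x < 2") (auto simp: less_2_cases_iff)
    qed
    then show ?thesis by simp
  next
    case False
    then have a: "\<psi> 0 = 1" using r0 by auto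
    then have b: "\<psi> 1 = 0" using r1 ne by auto
    have "\<psi> = tau"
    proof
      fix x show "\<psi> x = tau x"
        using a b out unfolding tau_def
        by (cases "x < 2") (auto simp: less_2_cases_iff transpose_def)
    qed
    then show ?thesis by simp
  qed
qed

lemma mk_prof:
  assumes "a \<in> {id, tau}" "b \<in> {id, tau}" "c \<in> {id, tau}"
  shows "mk a b c \<in> profiles 3 2"
  using assms tau_perm unfolding profiles_def mk_def
  by (auto simp: permutes_id)

lemma prof_cases:
  assumes "p \<in> profiles 3 2"
  shows "\<exists>a\<in>{id,tau}. \<exists>b\<in>{id,tau}. \<exists>c\<in>{id,tau}. p = mk a b c"
proof -
  have "\<forall>i<3. p i permutes {..<2}" and hi: "\<forall>i\<ge>3. p i = id"
    using assms unfolding profiles_def by auto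
  then have "p 0 \<in> {id,tau}" "p 1 \<in> {id,tau}" "p 2 \<in> {id,tau}" using perm2 by auto
  moreover have "p = mk (p 0) (p 1) (p 2)"
  proof
    fix i show "p i = mk (p 0) (p 1) (p 2) i"
      using hi unfolding mk_def
      by (cases "i = 0"; cases "i = 1"; cases "i = 2") auto
  qed
  ultimately show ?thesis by blast
qed

lemma act_flip: "act 3 id tau (mk a b c) = mk (tau \<circ> a) (tau \<circ> b) (tau \<circ> c)"
  unfolding act_def mk_def by (auto simp: fun_eq_iff)

lemma act_01: "act 3 (Transposition.transpose 0 1) id (mk a b c) = mk b a c"
  unfolding act_def mk_def by (auto simp: fun_eq_iff transpose_def)

lemma act_02: "act 3 (Transposition.transpose 0 2) id (mk a b c) = mk c b a"
  unfolding act_def mk_def by (auto simp: fun_eq_iff transpose_def)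

lemma act_12: "act 3 (Transposition.transpose 1 2) id (mk a b c) = mk a c b"
  unfolding act_def mk_def by (auto simp: fun_eq_iff transpose_def)


lemma tau_id_cases: "x \<in> {id, tau} \<Longrightarrow> tau \<circ> x \<in> {id, tau}"
  using tau_tau by auto

lemma no_sym:
  assumes spf: "is_SPF 3 2 F" and fl: "(id, tau) \<in> sym_group 3 2 F"
  shows "\<exists>\<phi>. \<phi> \<noteq> id \<and> (\<phi>, id) \<in> sym_group 3 2 F"
proof -
  have flip: "F (mk (tau \<circ> a) (tau \<circ> b) (tau \<circ> c)) = tau \<circ> F (mk a b c)"
    if "a \<in> {id,tau}" "b \<in> {id,tau}" "c \<in> {id,tau}" for a b c
    using fl mk_prof[OF that] unfolding sym_group_def by (auto simp: act_flip[symmetric])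
  have f1: "F (mk tau tau id) = tau \<circ> F (mk id id tau)"
    using flip[of id id tau] tau_tau by simp
  have f2: "F (mk tau id tau) = tau \<circ> F (mk id tau id)"
    using flip[of id tau id] tau_tau by simp
  have f3: "F (mk id tau tau) = tau \<circ> F (mk tau id id)"
    using flip[of tau id id] tau_tau by simp
  have v: "F (mk a b c) \<in> {id, tau}"
    if "a \<in> {id,tau}" "b \<in> {id,tau}" "c \<in> {id,tau}" for a b c
    using spf mk_prof[OF that] perm2 unfolding is_SPF_def by blast
  have x0: "F (mk tau id id) \<in> {id,tau}" and x1: "F (mk id tau id) \<in> {id,tau}"
    and x2: "F (mk id id tau) \<in> {id,tau}" by (rule v; simp)+
  have p3: "\<phi> permutes {..<3::nat}" if "\<phi> = Transposition.transpose i j" "i < 3" "j < 3" for \<phi> i j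
    using that by (simp add: permutes_swap_id)
  have "F (mk tau id id) = F (mk id tau id) \<or> F (mk tau id id) = F (mk id id tau)
      \<or> F (mk id tau id) = F (mk id id tau)"
    using x0 x1 x2 by auto
  then consider (a) "F (mk tau id id) = F (mk id tau id)"
    | (b) "F (mk tau id id) = F (mk id id tau)"
    | (c) "F (mk id tau id) = F (mk id id tau)" by blast
  then show ?thesis
  proof cases
    case a
    have "\<forall>p\<in>profiles 3 2. F (act 3 (Transposition.transpose 0 1) id p) = F p"
    proof
      fix p assume "p \<in> profiles 3 2"
      then obtain x y z where "x \<in> {id,tau}" "y \<in> {id,tau}" "z \<in> {id,tau}" and p: "p = mk x y z"
        using prof_cases by blast
      then show "F (act 3 (Transposition.transpose 0 1) id p) = F p"
        unfolding p act_01 using a f1 f2 f3 by auto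
    qed
    then have "(Transposition.transpose 0 1, id) \<in> sym_group 3 2 F"
      unfolding sym_group_def using p3[OF refl, of 0 1] permutes_id by auto
    moreover have "Transposition.transpose (0::nat) 1 \<noteq> id" by (simp add: transpose_eq_id_iff)
    ultimately show ?thesis by blast
  next
    case b
    have "\<forall>p\<in>profiles 3 2. F (act 3 (Transposition.transpose 0 2) id p) = F p"
    proof
      fix p assume "p \<in> profiles 3 2"
      then obtain x y z where "x \<in> {id,tau}" "y \<in> {id,tau}" "z \<in> {id,tau}" and p: "p = mk x y z"
        using prof_cases by blast
      then show "F (act 3 (Transposition.transpose 0 2) id p) = F p"
        unfolding p act_02 using b f1 f2 f3 by auto
    qed
    then have "(Transposition.transpose 0 2, id) \<in> sym_group 3 2 F"
      unfolding sym_group_def using p3[OF refl, of 0 2] permutes_id by auto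
    moreover have "Transposition.transpose (0::nat) 2 \<noteq> id" by (simp add: transpose_eq_id_iff)
    ultimately show ?thesis by blast
  next
    case c
    have "\<forall>p\<in>profiles 3 2. F (act 3 (Transposition.transpose 1 2) id p) = F p"
    proof
      fix p assume "p \<in> profiles 3 2"
      then obtain x y z where "x \<in> {id,tau}" "y \<in> {id,tau}" "z \<in> {id,tau}" and p: "p = mk x y z"
        using prof_cases by blast
      then show "F (act 3 (Transposition.transpose 1 2) id p) = F p"
        unfolding p act_12 using c f1 f2 f3 by auto
    qed
    then have "(Transposition.transpose 1 2, id) \<in> sym_group 3 2 F"
      unfolding sym_group_def using p3[OF refl, of 1 2] permutes_id by auto
    moreover have "Transposition.transpose (1::nat) 2 \<noteq> id" by (simp add: transpose_eq_id_iff)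
    ultimately show ?thesis by blast
  qed
qed

theorem mainTheorem9:
  defines "U \<equiv> {id} \<times> {\<psi>. \<psi> permutes {..<(2::nat)}}"
  shows "is_neutrality_group 3 2 U \<and> \<not> is_symmetry_group 3 2 U"
proof
  define F :: "(nat \<Rightarrow> nat \<Rightarrow> nat) \<Rightarrow> (nat \<Rightarrow> nat)" where "F = (\<lambda>p. p 0)"
  have spf: "is_SPF 3 2 F" unfolding is_SPF_def profiles_def F_def by auto
  have "U \<subseteq> sym_group 3 2 F"
    unfolding U_def sym_group_def F_def act_def by (auto simp: permutes_id)
  then have "U = neut_group 3 2 F" unfolding neut_group_def U_def by auto
  then show "is_neutrality_group 3 2 U" using spf unfolding is_neutrality_group_def by blast
next
  show "\<not> is_symmetry_group 3 2 U"
  proof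
    assume "is_symmetry_group 3 2 U"
    then obtain F where spf: "is_SPF 3 2 F" and UF: "U = sym_group 3 2 F"
      unfolding is_symmetry_group_def by blast
    have "(id, tau) \<in> sym_group 3 2 F" using UF tau_perm unfolding U_def by auto
    then obtain \<phi> where "\<phi> \<noteq> id" "(\<phi>, id) \<in> sym_group 3 2 F" using no_sym spf by blast
    then show False using UF unfolding U_def by auto
  qed
qed

end
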